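(* Let $f^+:[0,1]\to[0,1]$ be monotonically non-decreasing and piecewise convex, $f^-:[0,1]\to[0,1]$ monotonically non-decreasing and piecewise concave, and $f^\circ:[0,1]\to[0,1]$ monotonically non-decreasing. Let $A^+$ be the set of endpoints of the convex pieces of $f^+$ and $A^-$ the set of endpoints of the concave pieces of $f^-$ (so $\{0,1\}\subseteq A^+$ and $\{0,1\}\subseteq A^-$). Fix $\alpha>0$ and a sign pattern $(s_{uv},s_{vw},s_{uw})\in\{+,-,\varnothing\}^3$. If $\alpha LP(uvw)-ALG(uvw)<0$ for some edge lengths $(x^*_{uv},x^*_{vw},x^*_{uw})\in[0,1]^3$ satisfying the triangle inequalities, then there exist edge lengths $(x_{uv},x_{vw},x_{uw})\in[0,1]^3$ satisfying the triangle inequalities with $\alpha LP(uvw)-ALG(uvw)<0$ such that either (1) one of the triangle inequalities holds with equality, or (2) the lengths of all positive edges lie in $A^+$, the lengths of all negative edges lie in $A^-$, and the lengths of all neutral edges lie in $\{0,1\}$.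
   Context: A triangle $uvw$ has three pairs $uv,vw,uw$, each with a sign $s_e\in\{+,-,\varnothing\}$ (positive edge, negative edge, or neutral/no edge) and a length $x_e\in[0,1]$; the triangle inequalities are $x_{uv}\le x_{vw}+x_{uw}$, $x_{vw}\le x_{uv}+x_{uw}$, $x_{uw}\le x_{uv}+x_{vw}$. Let $p_e=f^{s_e}(x_e)$, where $f^{\varnothing}=f^\circ$. For a pair $(u,v)$ with third vertex $w$: $e.cost_w(u,v)=p_{uw}(1-p_{vw})+(1-p_{uw})p_{vw}$ if $s_{uv}=+$, $(1-p_{uw})(1-p_{vw})$ if $s_{uv}=-$, $0$ if $s_{uv}=\varnothing$; $e.lp_w(u,v)=(1-p_{uw}p_{vw})x_{uv}$ if $s_{uv}=+$, $(1-p_{uw}p_{vw})(1-x_{uv})$ if $s_{uv}=-$, $0$ if $s_{uv}=\varnothing$. Then $ALG(uvw)=e.cost_w(u,v)+e.cost_v(w,u)+e.cost_u(v,w)$ and $LP(uvw)=e.lp_w(u,v)+e.lp_v(w,u)+e.lp_u(v,w)$. *)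

theory Defs
  imports "HOL-Analysis.Analysis"
begin

datatype esign = Pos | Neg | Neu

definition piecewise_convex_with :: "(real \<Rightarrow> real) \<Rightarrow> real set \<Rightarrow> bool" where
  "piecewise_convex_with f A \<longleftrightarrow> finite A \<and> {0,1} \<subseteq> A \<and> A \<subseteq> {0..1} \<and>
     (\<forall>a\<in>A. \<forall>b\<in>A. a < b \<and> A \<inter> {a<..<b} = {} \<longrightarrow> convex_on {a..b} f)"

definition piecewise_concave_with :: "(real \<Rightarrow> real) \<Rightarrow> real set \<Rightarrow> bool" where
  "piecewise_concave_with f A \<longleftrightarrow> finite A \<and> {0,1} \<subseteq> A \<and> A \<subseteq> {0..1} \<and>
     (\<forall>a\<in>A. \<forall>b\<in>A. a < b \<and> A \<inter> {a<..<b} = {} \<longrightarrow> concave_on {a..b} f)"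

definition pval :: "(real \<Rightarrow> real) \<Rightarrow> (real \<Rightarrow> real) \<Rightarrow> (real \<Rightarrow> real) \<Rightarrow> esign \<Rightarrow> real \<Rightarrow> real" where
  "pval fp fm fo s x = (case s of Pos \<Rightarrow> fp x | Neg \<Rightarrow> fm x | Neu \<Rightarrow> fo x)"

text \<open>e.cost and e.lp of a pair with sign s and length x, whose two other edges
  (to the third vertex) have probabilities p1, p2.\<close>
definition ecost :: "esign \<Rightarrow> real \<Rightarrow> real \<Rightarrow> real" where
  "ecost s p1 p2 = (case s of Pos \<Rightarrow> p1 * (1 - p2) + (1 - p1) * p2
                             | Neg \<Rightarrow> (1 - p1) * (1 - p2) | Neu \<Rightarrow> 0)"

definition elp :: "esign \<Rightarrow> real \<Rightarrow> real \<Rightarrow> real \<Rightarrow> real" where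
  "elp s x p1 p2 = (case s of Pos \<Rightarrow> (1 - p1 * p2) * x
                            | Neg \<Rightarrow> (1 - p1 * p2) * (1 - x) | Neu \<Rightarrow> 0)"

definition ALG :: "(real \<Rightarrow> real) \<Rightarrow> (real \<Rightarrow> real) \<Rightarrow> (real \<Rightarrow> real) \<Rightarrow>
    esign \<Rightarrow> esign \<Rightarrow> esign \<Rightarrow> real \<Rightarrow> real \<Rightarrow> real \<Rightarrow> real" where
  "ALG fp fm fo suv svw suw xuv xvw xuw =
     (let puv = pval fp fm fo suv xuv; pvw = pval fp fm fo svw xvw; puw = pval fp fm fo suw xuw
      in ecost suv puw pvw + ecost suw pvw puv + ecost svw puv puw)"

definition LP :: "(real \<Rightarrow> real) \<Rightarrow> (real \<Rightarrow> real) \<Rightarrow> (real \<Rightarrow> real) \<Rightarrow>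
    esign \<Rightarrow> esign \<Rightarrow> esign \<Rightarrow> real \<Rightarrow> real \<Rightarrow> real \<Rightarrow> real" where
  "LP fp fm fo suv svw suw xuv xvw xuw =
     (let puv = pval fp fm fo suv xuv; pvw = pval fp fm fo svw xvw; puw = pval fp fm fo suw xuw
      in elp suv xuv puw pvw + elp suw xuw pvw puv + elp svw xvw puv puw)"

definition triangle_ok :: "real \<Rightarrow> real \<Rightarrow> real \<Rightarrow> bool" where
  "triangle_ok xuv xvw xuw \<longleftrightarrow> xuv \<in> {0..1} \<and> xvw \<in> {0..1} \<and> xuw \<in> {0..1} \<and>
     xuv \<le> xvw + xuw \<and> xvw \<le> xuv + xuw \<and> xuw \<le> xuv + xvw"

definition length_ok :: "real set \<Rightarrow> real set \<Rightarrow> esign \<Rightarrow> real \<Rightarrow> bool" where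
  "length_ok Ap Am s x = (case s of Pos \<Rightarrow> x \<in> Ap | Neg \<Rightarrow> x \<in> Am | Neu \<Rightarrow> x \<in> {0,1})"

end

theory Submission imports Defs begin

lemma cvx_min:
  fixes f :: "real \<Rightarrow> real"
  assumes cv: "convex_on {a..b} f" and "a \<le> l" "l \<le> x" "x \<le> r" "r \<le> b" "C \<le> 0"
  shows "A*x + C*f x \<ge> min (A*l + C*f l) (A*r + C*f r)"
proof (cases "l = r")
  case True then show ?thesis using assms by auto
next
  case False
  hence lr: "l < r" using assms by auto
  have cv': "convex_on {l..r} f" using convex_on_subset[OF cv] assms by auto
  have fx: "f x \<le> (f r - f l) / (r - l) * (x - l) + f l"
    using convex_onD_Icc'[OF cv'] assms by auto
  define \<mu> where "\<mu> = (x - l)/(r - l)"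
  have m0: "0 \<le> \<mu>" "\<mu> \<le> 1" using assms lr by (auto simp: \<mu>_def field_simps)
  have mr: "\<mu>*(r-l) = x - l" using lr by (simp add: \<mu>_def)
  have xe: "x = (1-\<mu>)*l + \<mu>*r" using mr by (simp add: algebra_simps)
  have "(f r - f l) / (r - l) * (x - l) = (f r - f l) * \<mu>" by (simp add: \<mu>_def)
  hence fx2: "f x \<le> (1-\<mu>) * f l + \<mu> * f r" using fx by (simp add: algebra_simps)
  have "C * f x \<ge> C * ((1-\<mu>) * f l + \<mu> * f r)"
    using fx2 assms(6) by (simp add: mult_left_mono_neg)
  hence "A*x + C*f x \<ge> (1-\<mu>)*(A*l + C*f l) + \<mu>*(A*r + C*f r)"
    by (simp add: xe algebra_simps)
  moreover have "(1-\<mu>)*(A*l + C*f l) + \<mu>*(A*r + C*f r) \<ge> min (A*l + C*f l) (A*r + C*f r)"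
  proof -
    let ?m = "min (A*l + C*f l) (A*r + C*f r)"
    have "(1-\<mu>)*(A*l + C*f l) \<ge> (1-\<mu>)*?m" using m0 by (intro mult_left_mono) auto
    moreover have "\<mu>*(A*r + C*f r) \<ge> \<mu>*?m" using m0 by (intro mult_left_mono) auto
    ultimately show ?thesis by (simp add: algebra_simps)
  qed
  ultimately show ?thesis by linarith
qed

lemma ccv_min:
  fixes f :: "real \<Rightarrow> real"
  assumes cv: "concave_on {a..b} f" and "a \<le> l" "l \<le> x" "x \<le> r" "r \<le> b" "C \<ge> 0"
  shows "A*x + C*f x \<ge> min (A*l + C*f l) (A*r + C*f r)"
  using cvx_min[of a b "\<lambda>t. - f t" l x r "-C" A] assms by (simp add: concave_on_def)

lemma piece:
  fixes S :: "real set"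
  assumes "finite S" "{0,1} \<subseteq> S" "x \<in> {0..1}" "x \<notin> S"
  obtains a b where "a \<in> S" "b \<in> S" "a < x" "x < b" "S \<inter> {a<..<b} = {}"
proof -
  let ?L = "{t\<in>S. t \<le> x}" and ?R = "{t\<in>S. t \<ge> x}"
  have L: "finite ?L" "?L \<noteq> {}" using assms by auto
  have R: "finite ?R" "?R \<noteq> {}" using assms by auto
  define a where "a = Max ?L"
  define b where "b = Min ?R"
  have a: "a \<in> S" "a \<le> x" using Max_in[OF L] a_def by auto
  have b: "b \<in> S" "b \<ge> x" using Min_in[OF R] b_def by auto
  have "S \<inter> {a<..<b} = {}"
  proof (rule ccontr)
    assume "S \<inter> {a<..<b} \<noteq> {}"
    then obtain t where t: "t \<in> S" "a < t" "t < b" by auto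
    show False
    proof (cases "t \<le> x")
      case True then have "t \<le> a" using L t a_def by auto
      then show False using t by auto
    next
      case False then have "b \<le> t" using R t b_def by auto
      then show False using t by auto
    qed
  qed
  moreover have "a < x" "x < b" using a b assms(4) by (auto simp: order.order_iff_strict)
  ultimately show ?thesis using that a b by blast
qed
definition Gv where "Gv fp fm fo \<alpha> s1 s2 s3 x1 x2 x3 =
  \<alpha> * LP fp fm fo s1 s2 s3 x1 x2 x3 - ALG fp fm fo s1 s2 s3 x1 x2 x3"

lemma Gv_swap: "Gv fp fm fo \<alpha> s2 s1 s3 x2 x1 x3 = Gv fp fm fo \<alpha> s1 s2 s3 x1 x2 x3"
  by (cases s1; cases s2; cases s3) (simp_all add: Gv_def LP_def ALG_def Let_def elp_def ecost_def algebra_simps)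

lemma Gv_rot: "Gv fp fm fo \<alpha> s3 s1 s2 x3 x1 x2 = Gv fp fm fo \<alpha> s1 s2 s3 x1 x2 x3"
  by (cases s1; cases s2; cases s3) (simp_all add: Gv_def LP_def ALG_def Let_def elp_def ecost_def algebra_simps)

lemma Gv_aff:
  assumes "p2 = pval fp fm fo s2 x2" and "p3 = pval fp fm fo s3 x3"
   and "H = (\<lambda>t p. \<alpha>*(elp s1 t p3 p2 + elp s3 x3 p2 p + elp s2 x2 p p3) - (ecost s1 p3 p2 + ecost s3 p2 p + ecost s2 p p3))"
  shows "Gv fp fm fo \<alpha> s1 s2 s3 t x2 x3 = \<alpha>*(elp s1 1 p3 p2 - elp s1 0 p3 p2) * t + (H 0 1 - H 0 0) * pval fp fm fo s1 t + H 0 0"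
  unfolding assms
  by (cases s1; cases s2; cases s3) (simp_all add: Gv_def LP_def ALG_def Let_def elp_def ecost_def algebra_simps)


lemma move:
  assumes mp: "mono_on {0..1} fp" and cp: "piecewise_convex_with fp Ap"
    and mm: "mono_on {0..1} fm" and cm: "piecewise_concave_with fm Am"
    and mo: "mono_on {0..1} fo"
    and sA: "s = Pos \<Longrightarrow> A \<ge> 0" "s = Neg \<Longrightarrow> A \<le> 0" "s = Neu \<Longrightarrow> A = 0"
    and b: "0 \<le> lo" "lo \<le> x" "x \<le> hi" "hi \<le> 1"
  shows "\<exists>x'. lo \<le> x' \<and> x' \<le> hi \<and> A*x' + C*pval fp fm fo s x' \<le> A*x + C*pval fp fm fo s x
           \<and> (x' = lo \<or> x' = hi \<or> length_ok Ap Am s x')"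
proof (cases s)
  case Neu
  show ?thesis
  proof (cases "C \<ge> 0")
    case True
    have "fo lo \<le> fo x" using mo b by (intro mono_onD[OF mo]) auto
    hence "C * fo lo \<le> C * fo x" using True by (intro mult_left_mono) auto
    then show ?thesis using Neu sA b by (intro exI[of _ lo]) (auto simp: pval_def)
  next
    case False
    have "fo x \<le> fo hi" using mo b by (intro mono_onD[OF mo]) auto
    hence "C * fo hi \<le> C * fo x" using False by (intro mult_left_mono_neg) auto
    then show ?thesis using Neu sA b by (intro exI[of _ hi]) (auto simp: pval_def)
  qed
next
  case Pos
  show ?thesis
  proof (cases "x \<in> Ap")
    case True then show ?thesis using b Pos by (intro exI[of _ x]) (auto simp: length_ok_def)
  next
    case False
    have fin: "finite Ap" "{0,1} \<subseteq> Ap" "Ap \<subseteq> {0..1}" using cp by (auto simp: piecewise_convex_with_def)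
    obtain a c where ac: "a \<in> Ap" "c \<in> Ap" "a < x" "x < c" "Ap \<inter> {a<..<c} = {}"
      using piece[OF fin(1,2), of x] False b by auto
    have cv: "convex_on {a..c} fp" using cp ac by (auto simp: piecewise_convex_with_def)
    have a01: "a \<in> {0..1}" "c \<in> {0..1}" using ac fin by auto
    show ?thesis
    proof (cases "C \<ge> 0")
      case True
      define x' where "x' = max lo a"
      have "fp x' \<le> fp x" using b a01 ac by (intro mono_onD[OF mp]) (auto simp: x'_def)
      hence "C * fp x' \<le> C * fp x" using True by (intro mult_left_mono) auto
      moreover have "A * x' \<le> A * x" using sA Pos b ac by (intro mult_left_mono) (auto simp: x'_def)
      ultimately show ?thesis using b ac Pos
        by (intro exI[of _ x']) (auto simp: pval_def x'_def length_ok_def max_def)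
    next
      case False
      define l where "l = max lo a"
      define r where "r = min hi c"
      have m: "A*x + C*fp x \<ge> min (A*l + C*fp l) (A*r + C*fp r)"
        using b ac False by (intro cvx_min[OF cv]) (auto simp: l_def r_def)
      show ?thesis
      proof (cases "A*l + C*fp l \<le> A*r + C*fp r")
        case True then show ?thesis using m b ac Pos
          by (intro exI[of _ l]) (auto simp: pval_def l_def length_ok_def max_def)
      next
        case False then show ?thesis using m b ac Pos
          by (intro exI[of _ r]) (auto simp: pval_def r_def length_ok_def min_def)
      qed
    qed
  qed
next
  case Neg
  show ?thesis
  proof (cases "x \<in> Am")
    case True then show ?thesis using b Neg by (intro exI[of _ x]) (auto simp: length_ok_def)
  next
    case False
    have fin: "finite Am" "{0,1} \<subseteq> Am" "Am \<subseteq> {0..1}" using cm by (auto simp: piecewise_concave_with_def)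
    obtain a c where ac: "a \<in> Am" "c \<in> Am" "a < x" "x < c" "Am \<inter> {a<..<c} = {}"
      using piece[OF fin(1,2), of x] False b by auto
    have cv: "concave_on {a..c} fm" using cm ac by (auto simp: piecewise_concave_with_def)
    have a01: "a \<in> {0..1}" "c \<in> {0..1}" using ac fin by auto
    show ?thesis
    proof (cases "C \<le> 0")
      case True
      define x' where "x' = min hi c"
      have "fm x \<le> fm x'" using b a01 ac by (intro mono_onD[OF mm]) (auto simp: x'_def)
      hence "C * fm x' \<le> C * fm x" using True by (intro mult_left_mono_neg) auto
      moreover have "A * x' \<le> A * x" using sA Neg b ac by (intro mult_left_mono_neg) (auto simp: x'_def)
      ultimately show ?thesis using b ac Neg
        by (intro exI[of _ x']) (auto simp: pval_def x'_def length_ok_def min_def)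
    next
      case False
      define l where "l = max lo a"
      define r where "r = min hi c"
      have m: "A*x + C*fm x \<ge> min (A*l + C*fm l) (A*r + C*fm r)"
        using b ac False by (intro ccv_min[OF cv]) (auto simp: l_def r_def)
      show ?thesis
      proof (cases "A*l + C*fm l \<le> A*r + C*fm r")
        case True then show ?thesis using m b ac Neg
          by (intro exI[of _ l]) (auto simp: pval_def l_def length_ok_def max_def)
      next
        case False then show ?thesis using m b ac Neg
          by (intro exI[of _ r]) (auto simp: pval_def r_def length_ok_def min_def)
      qed
    qed
  qed
qed


lemma pval_01:
  assumes "fp ` {0..1} \<subseteq> {0..1}" "fm ` {0..1} \<subseteq> {0..1}" "fo ` {0..1} \<subseteq> {0..1}" "x \<in> {0..1}"
  shows "pval fp fm fo s x \<in> {0..1}"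
  using assms by (cases s) (auto simp: pval_def image_subset_iff)

lemma step:
  assumes r: "fp ` {0..1} \<subseteq> {0..1}" "fm ` {0..1} \<subseteq> {0..1}" "fo ` {0..1} \<subseteq> {0..1}"
    and mp: "mono_on {0..1} fp" and cp: "piecewise_convex_with fp Ap"
    and mm: "mono_on {0..1} fm" and cm: "piecewise_concave_with fm Am"
    and mo: "mono_on {0..1} fo" and al: "\<alpha> > 0"
    and tri: "triangle_ok x1 x2 x3" and ng: "Gv fp fm fo \<alpha> s1 s2 s3 x1 x2 x3 < 0"
  shows "\<exists>y. triangle_ok y x2 x3 \<and> Gv fp fm fo \<alpha> s1 s2 s3 y x2 x3 < 0 \<and>
     ((y = x2 + x3 \<or> x2 = y + x3 \<or> x3 = y + x2) \<or> length_ok Ap Am s1 y)"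
proof -
  define p2 where "p2 = pval fp fm fo s2 x2"
  define p3 where "p3 = pval fp fm fo s3 x3"
  define H where "H = (\<lambda>t p. \<alpha>*(elp s1 t p3 p2 + elp s3 x3 p2 p + elp s2 x2 p p3) - (ecost s1 p3 p2 + ecost s3 p2 p + ecost s2 p p3))"
  define A where "A = \<alpha>*(elp s1 1 p3 p2 - elp s1 0 p3 p2)"
  define C where "C = H 0 1 - H 0 0"
  have aff: "\<And>t. Gv fp fm fo \<alpha> s1 s2 s3 t x2 x3 = A * t + C * pval fp fm fo s1 t + H 0 0"
    unfolding A_def C_def by (rule Gv_aff[OF p2_def p3_def H_def])
  have x23: "x2 \<in> {0..1}" "x3 \<in> {0..1}" using tri by (auto simp: triangle_ok_def)
  have p01: "p2 \<in> {0..1}" "p3 \<in> {0..1}" unfolding p2_def p3_def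
    by (rule pval_01[OF r x23(1)], rule pval_01[OF r x23(2)])
  have pp: "p3 * p2 \<le> 1" using p01 by (intro mult_le_one) auto
  have sA: "s1 = Pos \<Longrightarrow> A \<ge> 0" "s1 = Neg \<Longrightarrow> A \<le> 0" "s1 = Neu \<Longrightarrow> A = 0"
  proof -
    have "\<alpha> * (1 - p3 * p2) \<ge> 0" using al pp by simp
    then show "s1 = Pos \<Longrightarrow> A \<ge> 0" "s1 = Neg \<Longrightarrow> A \<le> 0" "s1 = Neu \<Longrightarrow> A = 0"
      by (auto simp: A_def elp_def algebra_simps)
  qed
  have t: "0 \<le> x1" "x1 \<le> 1" "0 \<le> x2" "x2 \<le> 1" "0 \<le> x3" "x3 \<le> 1"
     "x1 \<le> x2 + x3" "x2 \<le> x1 + x3" "x3 \<le> x1 + x2" using tri by (auto simp: triangle_ok_def)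
  have lo: "\<bar>x2 - x3\<bar> \<le> x1" using t by (auto simp: abs_if)
  obtain y where y: "\<bar>x2 - x3\<bar> \<le> y" "y \<le> min (x2+x3) 1"
    "A*y + C*pval fp fm fo s1 y \<le> A*x1 + C*pval fp fm fo s1 x1"
    "y = \<bar>x2 - x3\<bar> \<or> y = min (x2+x3) 1 \<or> length_ok Ap Am s1 y"
    using move[where s=s1 and A=A and lo="\<bar>x2 - x3\<bar>" and x=x1 and hi="min (x2+x3) 1" and C=C, OF mp cp mm cm mo sA] t lo by auto
  have "Gv fp fm fo \<alpha> s1 s2 s3 y x2 x3 < 0" using y(3) ng aff[of y] aff[of x1] by linarith
  moreover have "triangle_ok y x2 x3" using y t by (auto simp: triangle_ok_def)
  moreover have "(y = x2 + x3 \<or> x2 = y + x3 \<or> x3 = y + x2) \<or> length_ok Ap Am s1 y"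
  proof -
    have one: "length_ok Ap Am s1 1" using cp cm
      by (cases s1) (auto simp: length_ok_def piecewise_convex_with_def piecewise_concave_with_def)
    from y(4) show ?thesis
    proof (elim disjE)
      assume "y = \<bar>x2 - x3\<bar>" then show ?thesis by (auto simp: abs_if)
    next
      assume "y = min (x2+x3) 1" then show ?thesis using one by (auto simp: min_def split: if_splits)
    qed simp
  qed
  ultimately show ?thesis by blast
qed

theorem lemma2:
  fixes fp fm fo :: "real \<Rightarrow> real" and Ap Am :: "real set" and \<alpha> :: real
    and suv svw suw :: esign and xuv' xvw' xuw' :: real
  assumes "fp ` {0..1} \<subseteq> {0..1}" "mono_on {0..1} fp" "piecewise_convex_with fp Ap"
    and "fm ` {0..1} \<subseteq> {0..1}" "mono_on {0..1} fm" "piecewise_concave_with fm Am"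
    and "fo ` {0..1} \<subseteq> {0..1}" "mono_on {0..1} fo"
    and "\<alpha> > 0"
    and "triangle_ok xuv' xvw' xuw'"
    and "\<alpha> * LP fp fm fo suv svw suw xuv' xvw' xuw' - ALG fp fm fo suv svw suw xuv' xvw' xuw' < 0"
  shows "\<exists>xuv xvw xuw. triangle_ok xuv xvw xuw \<and>
           \<alpha> * LP fp fm fo suv svw suw xuv xvw xuw - ALG fp fm fo suv svw suw xuv xvw xuw < 0 \<and>
           ((xuv = xvw + xuw \<or> xvw = xuv + xuw \<or> xuw = xuv + xvw) \<or>
            (length_ok Ap Am suv xuv \<and> length_ok Ap Am svw xvw \<and> length_ok Ap Am suw xuw))"
proof -
  note H = assms(1,4,7,2,3,5,6,8,9)
  have T1: "triangle_ok a b c \<Longrightarrow> triangle_ok b a c" for a b c by (auto simp: triangle_ok_def)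
  have T2: "triangle_ok a b c \<Longrightarrow> triangle_ok c a b" for a b c by (auto simp: triangle_ok_def)
  have T3: "triangle_ok c a b \<Longrightarrow> triangle_ok a b c" for a b c by (auto simp: triangle_ok_def)
  let ?G = "Gv fp fm fo \<alpha> suv svw suw"
  have g0: "?G xuv' xvw' xuw' < 0" using assms(11) by (simp add: Gv_def)
  obtain y1 where y1: "triangle_ok y1 xvw' xuw'" "?G y1 xvw' xuw' < 0"
    "(y1 = xvw' + xuw' \<or> xvw' = y1 + xuw' \<or> xuw' = y1 + xvw') \<or> length_ok Ap Am suv y1"
    using step[OF H assms(10) g0] by blast
  show ?thesis
  proof (cases "length_ok Ap Am suv y1")
    case False
    have "y1 = xvw' + xuw' \<or> xvw' = y1 + xuw' \<or> xuw' = y1 + xvw'" using y1(3) False by auto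
    then show ?thesis using y1(1,2)
      by (intro exI[of _ y1] exI[of _ xvw'] exI[of _ xuw']) (auto simp: Gv_def)
  next
    case L1: True
    have g1: "Gv fp fm fo \<alpha> svw suv suw xvw' y1 xuw' < 0" using y1(2) by (simp add: Gv_swap)
    obtain y2 where y2: "triangle_ok y2 y1 xuw'" "Gv fp fm fo \<alpha> svw suv suw y2 y1 xuw' < 0"
      "(y2 = y1 + xuw' \<or> y1 = y2 + xuw' \<or> xuw' = y2 + y1) \<or> length_ok Ap Am svw y2"
      using step[OF H T1[OF y1(1)] g1] by blast
    have g2': "?G y1 y2 xuw' < 0" using y2(2) Gv_swap[of fp fm fo \<alpha> svw suv suw y2 y1 xuw'] by simp
    show ?thesis
    proof (cases "length_ok Ap Am svw y2")
      case False
      have "y1 = y2 + xuw' \<or> y2 = y1 + xuw' \<or> xuw' = y1 + y2" using y2(3) False by auto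
      then show ?thesis using T1[OF y2(1)] g2'
        by (intro exI[of _ y1] exI[of _ y2] exI[of _ xuw']) (auto simp: Gv_def)
    next
      case L2: True
      have g2: "Gv fp fm fo \<alpha> suw suv svw xuw' y1 y2 < 0" using g2' by (simp add: Gv_rot)
      obtain y3 where y3: "triangle_ok y3 y1 y2" "Gv fp fm fo \<alpha> suw suv svw y3 y1 y2 < 0"
        "(y3 = y1 + y2 \<or> y1 = y3 + y2 \<or> y2 = y3 + y1) \<or> length_ok Ap Am suw y3"
        using step[OF H T2[OF T1[OF y2(1)]] g2] by blast
      have g3: "?G y1 y2 y3 < 0" using y3(2) by (subst Gv_rot[symmetric])
      have "triangle_ok y1 y2 y3" using T3[OF y3(1)] .
      moreover have "(y1 = y2 + y3 \<or> y2 = y1 + y3 \<or> y3 = y1 + y2) \<or>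
          (length_ok Ap Am suv y1 \<and> length_ok Ap Am svw y2 \<and> length_ok Ap Am suw y3)"
        using y3(3) L1 L2 by auto
      ultimately show ?thesis using g3
        by (intro exI[of _ y1] exI[of _ y2] exI[of _ y3]) (simp add: Gv_def)
    qed
  qed
qed

end
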